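(* Let $m,p,k$ be positive integers, let $W \in \mathbb{R}^{m\times p}$, $\vec{x}\in\mathbb{R}^p$, let $\Theta$ be a real matrix with $k$ columns, let $f_m$ be a fixed function defined on $\{-1,+1\}^m$ with values in real vectors of length equal to the number of rows of $\Theta$, let $y$ be a target value, and let $\ell$ be a real-valued loss function such that $\ell(\Theta^{\top} f_m(\vec{g}), y)\in\mathbb{R}$ is defined for every $\vec{g}\in\{-1,+1\}^m$. Then for all real numbers $a > b > 0$, \[ \max_{\vec{g} \in \{-1,+1\}^m}\Big(a\,\vec{g}^{\top}W\vec{x} + \ell(\Theta^{\top} f_m(\vec{g}), y)\Big) - \max_{\vec{h} \in \{-1,+1\}^m} \big( a\,\vec{h}^{\top}W\vec{x} \big) \;\le\; \max_{\vec{g} \in \{-1,+1\}^m}\Big( b\,\vec{g}^{\top}W\vec{x} + \ell(\Theta^{\top} f_m(\vec{g}), y)\Big) - \max_{\vec{h} \in \{-1,+1\}^m} \big( b\,\vec{h}^{\top}W\vec{x} \big). \]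
   Context: This arises in learning oblique decision trees: the $m$ rows of $W$ are the split hyperplanes of the $m$ internal nodes of a binary tree, $\operatorname{sign}(W\vec{x})=\arg\max_{\vec{h}\in\{-1,+1\}^m}\vec{h}^\top W\vec{x}$ gives the split decisions, $f_m(\vec{g})$ is the indicator vector of the leaf reached given the binary split decisions $\vec{g}$, $\Theta$ contains the leaf parameters (one row per leaf), and $\ell$ is the loss of the prediction $\Theta^\top f_m(\vec{g})$ against target $y$. The right-hand-side quantity with scale $1$ is an upper bound on $\ell(\Theta^\top f_m(\operatorname{sign}(W\vec{x})),y)$; the proposition says this bound becomes tighter (smaller) as $W$ is scaled up. *)

theory Defs
  imports "HOL-Analysis.Analysis"
begin

definition sign_vectors :: "(real ^ 'm) set" where
  "sign_vectors = {g. \<forall>i. g $ i = 1 \<or> g $ i = -1}"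

end

theory Submission
  imports Defs
begin

lemma sv_finite: "finite (sign_vectors :: (real ^ 'm) set)"
proof -
  have "sign_vectors \<subseteq> vec_lambda ` (PiE (UNIV::'m set) (\<lambda>_. {1,-1::real}))"
  proof
    fix g :: "real ^ 'm" assume "g \<in> sign_vectors"
    then have "(\<lambda>i. g $ i) \<in> PiE UNIV (\<lambda>_. {1,-1::real})" by (auto simp: sign_vectors_def)
    moreover have "g = vec_lambda (\<lambda>i. g $ i)" by simp
    ultimately show "g \<in> vec_lambda ` (PiE (UNIV::'m set) (\<lambda>_. {1,-1::real}))" by blast
  qed
  moreover have "finite (PiE (UNIV::'m set) (\<lambda>_. {1,-1::real}))" by (intro finite_PiE) auto
  ultimately show ?thesis using finite_subset by blast
qed

lemma sv_ne: "(sign_vectors :: (real ^ 'm) set) \<noteq> {}"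
proof -
  have "(\<chi> i. (1 :: real)) \<in> (sign_vectors :: (real ^ 'm) set)" by (simp add: sign_vectors_def)
  then show ?thesis by blast
qed

theorem proposition1:
  fixes W :: "real ^ 'p ^ 'm" and x :: "real ^ 'p"
    and \<Theta> :: "real ^ 'k ^ 'n"
    and f :: "real ^ 'm \<Rightarrow> real ^ 'n"
    and y :: 'y
    and loss :: "real ^ 'k \<Rightarrow> 'y \<Rightarrow> real"
    and a b :: real
  assumes "a > b" and "b > 0"
  shows "Max ((\<lambda>g. a * (g \<bullet> (W *v x)) + loss (transpose \<Theta> *v f g) y) ` sign_vectors)
           - Max ((\<lambda>h. a * (h \<bullet> (W *v x))) ` sign_vectors)
         \<le> Max ((\<lambda>g. b * (g \<bullet> (W *v x)) + loss (transpose \<Theta> *v f g) y) ` sign_vectors)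
           - Max ((\<lambda>h. b * (h \<bullet> (W *v x))) ` sign_vectors)"
proof -
  define v where "v = W *v x"
  define L where "L g = loss (transpose \<Theta> *v f g) y" for g
  let ?S = "sign_vectors :: (real ^ 'm) set"
  have fin: "finite ?S" and ne: "?S \<noteq> {}" using sv_finite sv_ne by auto
  obtain g0 where g0: "g0 \<in> ?S" "Max ((\<lambda>g. a * (g \<bullet> v) + L g) ` ?S) = a * (g0 \<bullet> v) + L g0"
    proof -
    have "Max ((\<lambda>g. a * (g \<bullet> v) + L g) ` ?S) \<in> (\<lambda>g. a * (g \<bullet> v) + L g) ` ?S" using fin ne by (intro Max_in) auto
    then show ?thesis using that by blast
  qed
  obtain h1 where h1: "h1 \<in> ?S" "Max ((\<lambda>g. a * (g \<bullet> v)) ` ?S) = a * (h1 \<bullet> v)"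
    proof -
    have "Max ((\<lambda>g. a * (g \<bullet> v)) ` ?S) \<in> (\<lambda>g. a * (g \<bullet> v)) ` ?S" using fin ne by (intro Max_in) auto
    then show ?thesis using that by blast
  qed
  obtain h2 where h2: "h2 \<in> ?S" "Max ((\<lambda>g. b * (g \<bullet> v)) ` ?S) = b * (h2 \<bullet> v)"
    proof -
    have "Max ((\<lambda>g. b * (g \<bullet> v)) ` ?S) \<in> (\<lambda>g. b * (g \<bullet> v)) ` ?S" using fin ne by (intro Max_in) auto
    then show ?thesis using that by blast
  qed
  have ha: "a * (g \<bullet> v) \<le> a * (h1 \<bullet> v)" if "g \<in> ?S" for g
    using h1 that fin by (metis (no_types, lifting) Max_ge finite_imageI image_eqI)
  have hb: "b * (g \<bullet> v) \<le> b * (h2 \<bullet> v)" if "g \<in> ?S" for g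
    using h2 that fin by (metis (no_types, lifting) Max_ge finite_imageI image_eqI)
  have a0: "a > 0" using assms by linarith
  have e1: "h2 \<bullet> v \<le> h1 \<bullet> v" using ha[OF h2(1)] a0 by simp
  have e2: "h1 \<bullet> v \<le> h2 \<bullet> v" using hb[OF h1(1)] assms(2) by simp
  have gle: "g0 \<bullet> v \<le> h1 \<bullet> v" using ha[OF g0(1)] a0 by simp
  have B: "b * (g0 \<bullet> v) + L g0 \<le> Max ((\<lambda>g. b * (g \<bullet> v) + L g) ` ?S)"
    using g0(1) fin by (intro Max_ge) auto
  have "a * (g0 \<bullet> v) + L g0 - a * (h1 \<bullet> v) \<le> b * (g0 \<bullet> v) + L g0 - b * (h2 \<bullet> v)"
  proof -
    have "(a - b) * (g0 \<bullet> v - h1 \<bullet> v) \<le> 0"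
      using assms gle by (intro mult_nonneg_nonpos) auto
    then show ?thesis using e1 e2 by (simp add: algebra_simps)
  qed
  then show ?thesis using g0 h1 h2 B unfolding v_def[symmetric] L_def[symmetric] by linarith
qed

end
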